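(* Let $n>2$ be an integer, $q\in\mathbb{C}^\times$ and $\beta=-q-q^{-1}$. Every word $c$ in the generators $\Omega,\Omega^{-1},e_0,\dots,e_{n-1}$ of the affine Temperley--Lieb algebra $\mathsf{aTL}_n(\beta)$ can be rewritten, using the defining relations, in one of the three following forms: (i) $c=\Omega^k$ for some $k\in\mathbb{Z}$ (with $\Omega^0=\mathbf{1}$); (ii) $c=w$, where $w$ is a word in the generators $e_j$ only; (iii) $c=\Omega\, w$, where $w$ is a word in the generators $e_j$ only.
   Context: For $n>2$, the affine Temperley--Lieb algebra $\mathsf{aTL}_n(\beta)$ is the unital associative $\mathbb{C}$-algebra generated by $\Omega,\Omega^{-1},e_0,\dots,e_{n-1}$ subject to the relations (indices taken modulo $n$): $e_j^2=\beta e_j$, $e_je_{j\pm1}e_j=e_j$, $e_ie_j=e_je_i$ for $|i-j|>1$, $\Omega e_j\Omega^{-1}=e_{j-1}$, $\Omega\Omega^{-1}=\Omega^{-1}\Omega=\mathbf{1}$, and $\Omega^2e_1=e_{n-1}e_{n-2}\cdots e_2e_1$. *)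

theory Defs
  imports Complex_Main
begin

text \<open>Generators of the affine Temperley--Lieb algebra: Om = Omega, OmI = Omega inverse,
  E j = e_j (only j < n is a valid generator).\<close>
datatype gen = Om | OmI | E nat

definition valid_gen :: "nat \<Rightarrow> gen \<Rightarrow> bool" where
  "valid_gen n g = (case g of E j \<Rightarrow> j < n | _ \<Rightarrow> True)"

text \<open>Elements of the free associative C-algebra on the generators are represented as
  (finitely supported) coefficient functions on words. The basis element of a word:\<close>
definition wd :: "gen list \<Rightarrow> gen list \<Rightarrow> complex" where
  "wd w = (\<lambda>x. if x = w then 1 else 0)"

text \<open>Two-sided multiplication u * f * v by words u, v.\<close>
definition sw :: "gen list \<Rightarrow> (gen list \<Rightarrow> complex) \<Rightarrow> gen list \<Rightarrow> gen list \<Rightarrow> complex" where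
  "sw u f v = (\<lambda>x. if length u + length v \<le> length x \<and> take (length u) x = u
       \<and> drop (length x - length v) x = v
     then f (take (length x - length v - length u) (drop (length u) x)) else 0)"

definition aTL_rel :: "nat \<Rightarrow> complex \<Rightarrow> ((gen list \<Rightarrow> complex) \<times> (gen list \<Rightarrow> complex)) set" where
  "aTL_rel n \<beta> =
     {(wd [E j, E j], \<lambda>x. \<beta> * wd [E j] x) | j. j < n}
   \<union> {(wd [E j, E ((j + 1) mod n), E j], wd [E j]) | j. j < n}
   \<union> {(wd [E j, E ((j + n - 1) mod n), E j], wd [E j]) | j. j < n}
   \<union> {(wd [E i, E j], wd [E j, E i]) | i j. i < n \<and> j < n \<and> i \<noteq> j
          \<and> (i + 1) mod n \<noteq> j \<and> (j + 1) mod n \<noteq> i}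
   \<union> {(wd [Om, E j, OmI], wd [E ((j + n - 1) mod n)]) | j. j < n}
   \<union> {(wd [Om, OmI], wd []), (wd [OmI, Om], wd [])}
   \<union> {(wd [Om, Om, E 1], wd (map E (rev [1..<n])))}"

inductive_set aTL_ideal :: "nat \<Rightarrow> complex \<Rightarrow> (gen list \<Rightarrow> complex) set"
  for n :: nat and \<beta> :: complex where
  zero: "(\<lambda>_. 0) \<in> aTL_ideal n \<beta>"
| step: "\<lbrakk>f \<in> aTL_ideal n \<beta>; (l, r) \<in> aTL_rel n \<beta>;
          \<forall>g\<in>set u. valid_gen n g; \<forall>g\<in>set v. valid_gen n g\<rbrakk>
         \<Longrightarrow> (\<lambda>x. f x + c * sw u (\<lambda>y. l y - r y) v x) \<in> aTL_ideal n \<beta>"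

definition aTL_eq :: "nat \<Rightarrow> complex \<Rightarrow> (gen list \<Rightarrow> complex) \<Rightarrow> (gen list \<Rightarrow> complex) \<Rightarrow> bool" where
  "aTL_eq n \<beta> a b \<longleftrightarrow> (\<lambda>x. a x - b x) \<in> aTL_ideal n \<beta>"

definition Omega_pow :: "int \<Rightarrow> gen list" where
  "Omega_pow k = (if 0 \<le> k then replicate (nat k) Om else replicate (nat (- k)) OmI)"

end

theory Submission
  imports Defs
begin


lemma sw_app: "sw u f v (u @ m @ v) = f m"
  unfolding sw_def by simp

lemma sw_not: assumes "\<forall>m. x \<noteq> u @ m @ v" shows "sw u f v x = 0"
proof -
  { assume c: "length u + length v \<le> length x" "take (length u) x = u" "drop (length x - length v) x = v"
    let ?m = "take (length x - length v - length u) (drop (length u) x)"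
    have d: "drop (length x - length v - length u) (drop (length u) x) = drop (length x - length v) x"
      using c(1) by (simp add: drop_drop)
    have "x = take (length u) x @ drop (length u) x" by simp
    also have "drop (length u) x = ?m @ drop (length x - length v - length u) (drop (length u) x)"
      by (rule append_take_drop_id[symmetric])
    finally have "x = u @ ?m @ v" using c d by simp
    with assms have False by blast }
  then show ?thesis unfolding sw_def by auto
qed

lemma sw_comp: "sw a (sw u f v) b = sw (a @ u) f (v @ b)"
proof
  fix x
  show "sw a (sw u f v) b x = sw (a @ u) f (v @ b) x"
  proof (cases "\<exists>m. x = a @ u @ m @ v @ b")
    case True
    then obtain m where m: "x = a @ u @ m @ v @ b" by blast
    have "sw a (sw u f v) b x = sw u f v (u @ m @ v)"
      using sw_app[of a "sw u f v" b "u @ m @ v"] m by simp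
    also have "\<dots> = f m" by (rule sw_app)
    also have "\<dots> = sw (a @ u) f (v @ b) x"
      using sw_app[of "a @ u" f "v @ b" m] m by simp
    finally show ?thesis .
  next
    case False
    have r: "sw (a @ u) f (v @ b) x = 0" using False by (intro sw_not) simp
    show ?thesis
    proof (cases "\<exists>y. x = a @ y @ b")
      case True
      then obtain y where y: "x = a @ y @ b" by blast
      have "\<forall>m. y \<noteq> u @ m @ v" using False y by auto
      hence "sw u f v y = 0" by (rule sw_not)
      then show ?thesis using r y sw_app[of a "sw u f v" b y] by simp
    next
      case False
      then show ?thesis using r by (simp add: sw_not)
    qed
  qed
qed

lemma sw_lin: "sw u (\<lambda>y. f y + c * g y) v = (\<lambda>x. sw u f v x + c * sw u g v x)"
  unfolding sw_def by auto

lemma sw_diff: "sw u (\<lambda>y. f y - g y) v = (\<lambda>x. sw u f v x - sw u g v x)"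
  unfolding sw_def by auto

lemma sw_zero: "sw u (\<lambda>_. 0) v = (\<lambda>_. 0)"
  unfolding sw_def by auto

lemma sw_nil: "sw [] f [] = f"
  unfolding sw_def by auto

lemma sw_wd: "sw a (wd w) b = wd (a @ w @ b)"
proof
  fix x
  show "sw a (wd w) b x = wd (a @ w @ b) x"
  proof (cases "\<exists>m. x = a @ m @ b")
    case True
    then obtain m where "x = a @ m @ b" by blast
    then show ?thesis by (simp add: sw_app wd_def)
  next
    case False
    then show ?thesis by (auto simp: sw_not wd_def)
  qed
qed

lemma wd_eq_iff[simp]: "wd a = wd b \<longleftrightarrow> a = b"
  unfolding wd_def by (metis zero_neq_one)

lemma ideal_add: "g \<in> aTL_ideal n \<beta> \<Longrightarrow> f \<in> aTL_ideal n \<beta> \<Longrightarrow> (\<lambda>x. f x + g x) \<in> aTL_ideal n \<beta>"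
proof (induction g rule: aTL_ideal.induct)
  case zero
  then show ?case by simp
next
  case (step g l r u v c)
  have "(\<lambda>x. (f x + g x) + c * sw u (\<lambda>y. l y - r y) v x) \<in> aTL_ideal n \<beta>"
    using step by (intro aTL_ideal.step) auto
  then show ?case by (simp add: add.assoc)
qed

lemma ideal_smult: "f \<in> aTL_ideal n \<beta> \<Longrightarrow> (\<lambda>x. d * f x) \<in> aTL_ideal n \<beta>"
proof (induction f rule: aTL_ideal.induct)
  case zero
  then show ?case by (simp add: aTL_ideal.zero)
next
  case (step g l r u v c)
  have "(\<lambda>x. d * g x + (d * c) * sw u (\<lambda>y. l y - r y) v x) \<in> aTL_ideal n \<beta>"
    using step by (intro aTL_ideal.step) auto
  then show ?case by (simp add: algebra_simps)
qed

lemma ideal_sw: "f \<in> aTL_ideal n \<beta> \<Longrightarrow> \<forall>g\<in>set a. valid_gen n g \<Longrightarrow> \<forall>g\<in>set b. valid_gen n g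
   \<Longrightarrow> sw a f b \<in> aTL_ideal n \<beta>"
proof (induction f rule: aTL_ideal.induct)
  case zero
  then show ?case by (simp add: aTL_ideal.zero sw_zero)
next
  case (step g l r u v c)
  have "(\<lambda>x. sw a g b x + c * sw (a @ u) (\<lambda>y. l y - r y) (v @ b) x) \<in> aTL_ideal n \<beta>"
    using step by (intro aTL_ideal.step) auto
  then show ?case by (simp add: sw_lin sw_comp)
qed

definition req :: "nat \<Rightarrow> complex \<Rightarrow> gen list \<Rightarrow> gen list \<Rightarrow> bool" where
  "req n \<beta> u v = aTL_eq n \<beta> (wd u) (wd v)"

lemma req_refl: "req n \<beta> u u"
  unfolding req_def aTL_eq_def by (simp add: aTL_ideal.zero)

lemma req_sym: "req n \<beta> u v \<Longrightarrow> req n \<beta> v u"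
  unfolding req_def aTL_eq_def
  by (drule ideal_smult[where d = "-1"]) (simp add: algebra_simps)

lemma req_trans[trans]: "req n \<beta> u v \<Longrightarrow> req n \<beta> v w \<Longrightarrow> req n \<beta> u w"
  unfolding req_def aTL_eq_def
  by (drule (1) ideal_add) (simp add: algebra_simps)

lemma req_cong: "req n \<beta> u v \<Longrightarrow> \<forall>g\<in>set a. valid_gen n g \<Longrightarrow> \<forall>g\<in>set b. valid_gen n g
   \<Longrightarrow> req n \<beta> (a @ u @ b) (a @ v @ b)"
  unfolding req_def aTL_eq_def
  by (drule (2) ideal_sw) (simp add: sw_diff sw_wd)

lemma req_rel: "(wd l, wd r) \<in> aTL_rel n \<beta> \<Longrightarrow> req n \<beta> l r"
  unfolding req_def aTL_eq_def
  using aTL_ideal.step[OF aTL_ideal.zero, of "wd l" "wd r" n \<beta> "[]" "[]" 1]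
  by (simp add: sw_nil)

lemma valid_gen_simps[simp]: "valid_gen n Om" "valid_gen n OmI" "valid_gen n (E j) \<longleftrightarrow> j < n"
  unfolding valid_gen_def by auto

lemma R1: "req n \<beta> [Om, OmI] []" by (rule req_rel) (simp add: aTL_rel_def)
lemma R2: "req n \<beta> [OmI, Om] []" by (rule req_rel) (simp add: aTL_rel_def)
lemma R3: "j < n \<Longrightarrow> req n \<beta> [Om, E j, OmI] [E ((j + n - 1) mod n)]"
  by (rule req_rel) (auto simp: aTL_rel_def)
lemma R4: "j < n \<Longrightarrow> req n \<beta> [E j, E ((j + n - 1) mod n), E j] [E j]"
  by (rule req_rel) (auto simp: aTL_rel_def)
lemma R5: "req n \<beta> [Om, Om, E 1] (map E (rev [1..<n]))"
  by (rule req_rel) (auto simp: aTL_rel_def)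



lemma rep2: "2 \<le> m \<Longrightarrow> replicate m x = replicate (m - 2) x @ [x, x]"
proof -
  assume "2 \<le> m"
  then obtain m' where "m = Suc (Suc m')" by (metis add_2_eq_Suc le_Suc_ex)
  moreover have "replicate m' x @ [x, x] = x # x # replicate m' x"
    by (metis append.assoc append_Cons append_Nil replicate_append_same)
  ultimately show ?thesis by simp
qed

lemma rep_snoc: "replicate (Suc m) x @ ys = replicate m x @ x # ys"
  by (induction m) auto

definition nf :: "nat \<Rightarrow> complex \<Rightarrow> gen list \<Rightarrow> bool" where
  "nf n \<beta> c = ((\<exists>k::int. req n \<beta> c (Omega_pow k))
       \<or> (\<exists>w. (\<forall>g\<in>set w. \<exists>j<n. g = E j) \<and> req n \<beta> c w)
       \<or> (\<exists>w. (\<forall>g\<in>set w. \<exists>j<n. g = E j) \<and> req n \<beta> c (Om # w)))"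

context
  fixes n :: nat and \<beta> :: complex
  assumes n2: "n > 2"
begin

abbreviation R where "R u v \<equiv> req n \<beta> u v"

lemma cong: "R u v \<Longrightarrow> \<forall>g\<in>set a. valid_gen n g \<Longrightarrow> \<forall>g\<in>set b. valid_gen n g
   \<Longrightarrow> R (a @ u @ b) (a @ v @ b)"
  by (rule req_cong)

lemma down_up: "j < n \<Longrightarrow> ((j + 1) mod n + n - 1) mod n = j"
proof (cases "j + 1 < n")
  case True
  assume "j < n"
  then have a: "(j + 1) mod n = j + 1" using True by simp
  have b: "j + 1 + n - 1 = j + n" by simp
  show ?thesis unfolding a b using \<open>j < n\<close> by simp
next
  case False
  assume "j < n"
  then have a: "j + 1 = n" using False by simp
  then have "(j + 1) mod n = 0" by simp
  then show ?thesis using a by simp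
qed

lemma up_down: "j < n \<Longrightarrow> ((j + n - 1) mod n + 1) mod n = j"
proof (cases "j = 0")
  case True
  have a: "(0 + n - 1) mod n = n - 1" using n2 by simp
  have "n - 1 + 1 = n" using n2 by simp
  then show ?thesis using True a by simp
next
  case False
  assume "j < n"
  then have a: "j + n - 1 = (j - 1) + n" using False by simp
  have b: "(j - 1 + n) mod n = j - 1" using \<open>j < n\<close> by simp
  have c: "j - 1 + 1 = j" using False by simp
  show ?thesis unfolding a b c using \<open>j < n\<close> by simp
qed

lemma EOm: "j < n \<Longrightarrow> R [E j, Om] [Om, E ((j + 1) mod n)]"
proof -
  assume j: "j < n"
  let ?k = "(j + 1) mod n"
  have k: "?k < n" using n2 by simp
  have X: "R ([Om, E ?k] @ [OmI, Om] @ []) ([Om, E ?k] @ [] @ [])"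
    using k by (intro cong[OF R2]) auto
  have "R [Om, E ?k] ([Om, E ?k] @ [OmI, Om] @ [])"
    using req_sym[OF X] by simp
  also have "R \<dots> ([] @ [Om, E ?k, OmI] @ [Om])"
    by (simp add: req_refl)
  also have "R \<dots> ([] @ [E ((?k + n - 1) mod n)] @ [Om])"
    by (rule cong[OF R3[OF k]]) auto
  finally have F: "R [Om, E ?k] ([] @ [E ((?k + n - 1) mod n)] @ [Om])" .
  show ?thesis using req_sym[OF F] down_up[OF j] by simp
qed

lemma EOmI: "j < n \<Longrightarrow> R [E j, OmI] [OmI, E ((j + n - 1) mod n)]"
proof -
  assume j: "j < n"
  let ?k = "(j + n - 1) mod n"
  have k: "?k < n" using n2 by simp
  have k1: "(?k + 1) mod n < n" using n2 by simp
  have X: "R ([OmI] @ [Om, E ((?k + 1) mod n), OmI] @ []) ([OmI] @ [E (((?k + 1) mod n + n - 1) mod n)] @ [])"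
    by (rule cong[OF R3[OF k1]]) auto
  have "R [OmI, E ?k] ([OmI] @ [Om, E ((?k + 1) mod n), OmI] @ [])"
    using req_sym[OF X] down_up[OF k] by simp
  also have "R \<dots> ([] @ [OmI, Om] @ [E ((?k + 1) mod n), OmI])"
    by (simp add: req_refl)
  also have "R \<dots> ([] @ [] @ [E ((?k + 1) mod n), OmI])"
    using n2 by (intro cong[OF R2]) auto
  finally have "R [OmI, E ?k] [E ((?k + 1) mod n), OmI]" by simp
  then show ?thesis unfolding up_down[OF j] by (rule req_sym)
qed

lemma shift_up: "\<forall>j\<in>set js. j < n \<Longrightarrow> R (map E js @ [Om]) (Om # map E (map (\<lambda>j. (j + 1) mod n) js))"
proof (induction js)
  case Nil
  then show ?case by (simp add: req_refl)
next
  case (Cons j js)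
  have "R ([E j] @ (map E js @ [Om]) @ []) ([E j] @ (Om # map E (map (\<lambda>j. (j + 1) mod n) js)) @ [])"
    using Cons by (intro cong[OF Cons.IH]) auto
  also have "R \<dots> ([] @ [E j, Om] @ map E (map (\<lambda>j. (j + 1) mod n) js))" by (simp add: req_refl)
  also have "R \<dots> ([] @ [Om, E ((j + 1) mod n)] @ map E (map (\<lambda>j. (j + 1) mod n) js))"
    using Cons n2 by (intro cong[OF EOm]) auto
  finally show ?case by simp
qed

lemma shift_down: "\<forall>j\<in>set js. j < n \<Longrightarrow> R (map E js @ [OmI]) (OmI # map E (map (\<lambda>j. (j + n - 1) mod n) js))"
proof (induction js)
  case Nil
  then show ?case by (simp add: req_refl)
next
  case (Cons j js)
  have "R ([E j] @ (map E js @ [OmI]) @ []) ([E j] @ (OmI # map E (map (\<lambda>j. (j + n - 1) mod n) js)) @ [])"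
    using Cons by (intro cong[OF Cons.IH]) auto
  also have "R \<dots> ([] @ [E j, OmI] @ map E (map (\<lambda>j. (j + n - 1) mod n) js))" by (simp add: req_refl)
  also have "R \<dots> ([] @ [OmI, E ((j + n - 1) mod n)] @ map E (map (\<lambda>j. (j + n - 1) mod n) js))"
    using Cons n2 by (intro cong[OF EOmI]) auto
  finally show ?case by simp
qed

lemma conj: "\<forall>j\<in>set js. j < n \<Longrightarrow> R (OmI # map E js @ [Om]) (map E (map (\<lambda>j. (j + 1) mod n) js))"
proof -
  assume js: "\<forall>j\<in>set js. j < n"
  have "R ([OmI] @ (map E js @ [Om]) @ []) ([OmI] @ (Om # map E (map (\<lambda>j. (j + 1) mod n) js)) @ [])"
    using js by (intro cong[OF shift_up]) auto
  also have "R \<dots> ([] @ [OmI, Om] @ map E (map (\<lambda>j. (j + 1) mod n) js))" by (simp add: req_refl)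
  also have "R \<dots> ([] @ [] @ map E (map (\<lambda>j. (j + 1) mod n) js))"
    using n2 by (intro cong[OF R2]) auto
  finally show ?thesis by simp
qed


lemma P_aux: "\<exists>V. (\<forall>x\<in>set V. x < n) \<and> R [Om, Om, E ((1 + m) mod n)] (map E V)"
proof (induction m)
  case 0
  have "(1 + 0) mod n = 1" using n2 by simp
  then show ?case using R5[of n \<beta>] by (intro exI[of _ "rev [1..<n]"]) auto
next
  case (Suc m)
  then obtain V where V: "\<forall>x\<in>set V. x < n" "R [Om, Om, E ((1 + m) mod n)] (map E V)" by blast
  define j where "j = (1 + m) mod n"
  have j: "j < n" using n2 unfolding j_def by simp
  have eq: "(1 + Suc m) mod n = (j + 1) mod n" unfolding j_def by (simp add: mod_Suc_eq)
  have "R [Om, Om, E ((j + 1) mod n)] ([Om, Om] @ (OmI # map E [j] @ [Om]) @ [])"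
    using cong[OF req_sym[OF conj[of "[j]"]], of "[Om, Om]" "[]"] j by simp
  also have "R \<dots> ([Om] @ [Om, OmI] @ [E j, Om])" by (simp add: req_refl)
  also have "R \<dots> ([Om] @ [] @ [E j, Om])" using j by (intro cong[OF R1]) auto
  also have "R \<dots> ([] @ [] @ [Om, E j, Om])" by (simp add: req_refl)
  also have "R \<dots> ([] @ [OmI, Om] @ [Om, E j, Om])"
    by (rule req_sym, rule cong[OF R2]) (auto simp: j)
  also have "R \<dots> ([OmI] @ [Om, Om, E j] @ [Om])" by (simp add: req_refl)
  also have "R \<dots> ([OmI] @ map E V @ [Om])" using V(2) unfolding j_def by (intro cong) auto
  also have "R \<dots> (map E (map (\<lambda>j. (j + 1) mod n) V))" using conj[OF V(1)] by simp
  finally show ?case unfolding eq using n2 by (intro exI[of _ "map (\<lambda>j. (j + 1) mod n) V"]) auto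
qed

lemma P: "j < n \<Longrightarrow> \<exists>V. (\<forall>x\<in>set V. x < n) \<and> R [Om, Om, E j] (map E V)"
proof -
  assume j: "j < n"
  have "(1 + (j + n - 1)) mod n = j" using j n2 by simp
  then show ?thesis using P_aux[of "j + n - 1"] by simp
qed

lemma S_aux: "Suc k < n \<Longrightarrow> R ([OmI, OmI] @ map E (rev [Suc k..<n])) (map E [1..<Suc (Suc k)])"
proof (induction k)
  case 0
  have "R ([OmI, OmI] @ map E (rev [1..<n]) @ []) ([OmI, OmI] @ [Om, Om, E 1] @ [])"
    using n2 by (intro cong[OF req_sym[OF R5]]) auto
  also have "R \<dots> ([OmI] @ [OmI, Om] @ [Om, E 1])" by (simp add: req_refl)
  also have "R \<dots> ([OmI] @ [] @ [Om, E 1])" using n2 by (intro cong[OF R2]) auto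
  also have "R \<dots> ([] @ [OmI, Om] @ [E 1])" by (simp add: req_refl)
  also have "R \<dots> ([] @ [] @ [E 1])" using n2 by (intro cong[OF R2]) auto
  finally show ?case by simp
next
  case (Suc k)
  have IH: "R ([OmI, OmI] @ map E (rev [Suc k..<n])) (map E [1..<Suc (Suc k)])"
    using Suc by simp
  define B where "B = [OmI, OmI] @ map E (rev [Suc (Suc (Suc k))..<n])"
  have r1: "rev [Suc k..<n] = rev [Suc (Suc (Suc k))..<n] @ [Suc (Suc k), Suc k]"
    using Suc.prems by (simp add: upt_conv_Cons)
  have r2: "rev [Suc (Suc k)..<n] = rev [Suc (Suc (Suc k))..<n] @ [Suc (Suc k)]"
    using Suc.prems by (simp add: upt_conv_Cons)
  have dn0: "Suc (Suc k) + n - 1 = Suc k + n" by simp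
  have dn: "(Suc (Suc k) + n - 1) mod n = Suc k" unfolding dn0 mod_add_self2 using Suc.prems by simp
  have vB: "\<forall>g\<in>set B. valid_gen n g" unfolding B_def by auto
  have "R (B @ [E (Suc (Suc k))] @ []) (B @ [E (Suc (Suc k)), E (Suc k), E (Suc (Suc k))] @ [])"
  proof -
    have X: "R (B @ [E (Suc (Suc k)), E ((Suc (Suc k) + n - 1) mod n), E (Suc (Suc k))] @ []) (B @ [E (Suc (Suc k))] @ [])"
      using Suc.prems vB by (intro cong[OF R4]) auto
    show ?thesis using req_sym[OF X] unfolding dn .
  qed
  also have "R \<dots> ([] @ ([OmI, OmI] @ map E (rev [Suc k..<n])) @ [E (Suc (Suc k))])"
    unfolding B_def r1 by (simp add: req_refl)
  also have "R \<dots> ([] @ map E [1..<Suc (Suc k)] @ [E (Suc (Suc k))])"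
    using Suc.prems by (intro cong[OF IH]) auto
  finally show ?case unfolding B_def r2 by simp
qed

lemma Q_aux: "\<exists>V. (\<forall>x\<in>set V. x < n) \<and> R [OmI, OmI, E ((n - 1 + m) mod n)] (map E V)"
proof (induction m)
  case 0
  have a: "(n - 1 + 0) mod n = n - 1" using n2 by simp
  have b: "Suc (n - 2) = n - 1" "Suc (Suc (n - 2)) = n" using n2 by auto
  have "R ([OmI, OmI] @ map E (rev [Suc (n - 2)..<n])) (map E [1..<Suc (Suc (n - 2))])"
    using n2 by (intro S_aux) auto
  then have "R [OmI, OmI, E (n - 1)] (map E [1..<n])" unfolding b using n2
    by (simp add: upt_conv_Cons)
  then show ?case unfolding a by (intro exI[of _ "[1..<n]"]) auto
next
  case (Suc m)
  then obtain V where V: "\<forall>x\<in>set V. x < n" "R [OmI, OmI, E ((n - 1 + m) mod n)] (map E V)" by blast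
  define j where "j = (n - 1 + m) mod n"
  have j: "j < n" using n2 unfolding j_def by simp
  have eq: "(n - 1 + Suc m) mod n = (j + 1) mod n" unfolding j_def by (simp add: mod_Suc_eq)
  have "R [OmI, OmI, E ((j + 1) mod n)] ([OmI, OmI] @ (OmI # map E [j] @ [Om]) @ [])"
    using cong[OF req_sym[OF conj[of "[j]"]], of "[OmI, OmI]" "[]"] j by simp
  also have "R \<dots> ([OmI] @ [OmI, OmI, E j] @ [Om])" by (simp add: req_refl)
  also have "R \<dots> ([OmI] @ map E V @ [Om])" using V(2) unfolding j_def by (intro cong) auto
  also have "R \<dots> (map E (map (\<lambda>j. (j + 1) mod n) V))" using conj[OF V(1)] by simp
  finally show ?case unfolding eq using n2 by (intro exI[of _ "map (\<lambda>j. (j + 1) mod n) V"]) auto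
qed

lemma Q: "j < n \<Longrightarrow> \<exists>V. (\<forall>x\<in>set V. x < n) \<and> R [OmI, OmI, E j] (map E V)"
proof -
  assume j: "j < n"
  have "(n - 1 + (j + 1)) mod n = j" using j n2 by simp
  then show ?thesis using Q_aux[of "j + 1"] by simp
qed


lemma vOm: "\<forall>g\<in>set (Omega_pow k). valid_gen n g"
  unfolding Omega_pow_def by auto

lemma nf_trans: "R c d \<Longrightarrow> nf n \<beta> d \<Longrightarrow> nf n \<beta> c"
proof -
  assume cd: "R c d" and "nf n \<beta> d"
  then consider (a) k where "R d (Omega_pow k)"
    | (b) w where "\<forall>g\<in>set w. \<exists>j<n. g = E j" "R d w"
    | (c) w where "\<forall>g\<in>set w. \<exists>j<n. g = E j" "R d (Om # w)"
    unfolding nf_def by blast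
  then show ?thesis
  proof cases
    case a
    then show ?thesis unfolding nf_def using req_trans[OF cd] by blast
  next
    case b
    then show ?thesis unfolding nf_def using req_trans[OF cd] by blast
  next
    case c
    then show ?thesis unfolding nf_def using req_trans[OF cd] by blast
  qed
qed

lemma nf_E: "\<forall>j\<in>set js. j < n \<Longrightarrow> nf n \<beta> (map E js)"
  unfolding nf_def by (intro disjI2 disjI1 exI[of _ "map E js"]) (auto simp: req_refl)

lemma nf_OmE: "\<forall>j\<in>set js. j < n \<Longrightarrow> nf n \<beta> (Om # map E js)"
  unfolding nf_def by (intro disjI2 exI[of _ "map E js"]) (auto simp: req_refl)

lemma nf_pow: "nf n \<beta> (Omega_pow k)"
  unfolding nf_def by (intro disjI1 exI[of _ k]) (auto simp: req_refl)

lemma G_pos: "\<forall>j\<in>set js. j < n \<Longrightarrow> nf n \<beta> (Omega_pow (int m) @ map E js)"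
proof (induction m arbitrary: js rule: less_induct)
  case (less m)
  show ?case
  proof (cases "m < 2")
    case True
    then consider "m = 0" | "m = 1" by linarith
    then show ?thesis
    proof cases
      case 1
      then show ?thesis using less.prems nf_E by (simp add: Omega_pow_def)
    next
      case 2
      then show ?thesis using less.prems nf_OmE by (simp add: Omega_pow_def)
    qed
  next
    case False
    show ?thesis
    proof (cases js)
      case Nil
      then show ?thesis using nf_pow by simp
    next
      case (Cons j js')
      then have j: "j < n" and js': "\<forall>j\<in>set js'. j < n" using less.prems by auto
      obtain V where V: "\<forall>x\<in>set V. x < n" "R [Om, Om, E j] (map E V)" using P[OF j] by blast
      have op: "Omega_pow (int m) = Omega_pow (int (m - 2)) @ [Om, Om]"
        unfolding Omega_pow_def using rep2[of m Om] False by simp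
      have "R (Omega_pow (int (m - 2)) @ [Om, Om, E j] @ map E js')
              (Omega_pow (int (m - 2)) @ map E V @ map E js')"
        using vOm js' by (intro cong[OF V(2)]) auto
      then have r: "R (Omega_pow (int m) @ map E js) (Omega_pow (int (m - 2)) @ map E (V @ js'))"
        unfolding op Cons by simp
      have "nf n \<beta> (Omega_pow (int (m - 2)) @ map E (V @ js'))"
        using less.IH[of "m - 2" "V @ js'"] False V(1) js' by auto
      with r show ?thesis by (rule nf_trans)
    qed
  qed
qed

lemma G_neg: "\<forall>j\<in>set js. j < n \<Longrightarrow> nf n \<beta> (Omega_pow (- int m) @ map E js)"
proof (induction m arbitrary: js rule: less_induct)
  case (less m)
  show ?case
  proof (cases "m = 0")
    case True
    then show ?thesis using less.prems nf_E by (simp add: Omega_pow_def)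
  next
    case False
    show ?thesis
    proof (cases js)
      case Nil
      then show ?thesis using nf_pow by simp
    next
      case (Cons j js')
      then have j: "j < n" and js': "\<forall>j\<in>set js'. j < n" using less.prems by auto
      obtain V where V: "\<forall>x\<in>set V. x < n" "R [OmI, OmI, E j] (map E V)" using Q[OF j] by blast
      show ?thesis
      proof (cases "m = 1")
        case True
        have op: "Omega_pow (- int m) = [OmI]" using True by (simp add: Omega_pow_def)
        have "R ([] @ [] @ [OmI, E j] @ map E js') ([] @ [Om, OmI] @ [OmI, E j] @ map E js')"
          by (rule req_sym, rule cong[OF R1]) (auto simp: j js')
        also have "R \<dots> ([Om] @ [OmI, OmI, E j] @ map E js')" by (simp add: req_refl)
        also have "R \<dots> ([Om] @ map E V @ map E js')" using js' by (intro cong[OF V(2)]) auto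
        finally have "R (Omega_pow (- int m) @ map E js) (Omega_pow (int 1) @ map E (V @ js'))"
          unfolding op Cons by (simp add: Omega_pow_def)
        moreover have "nf n \<beta> (Omega_pow (int 1) @ map E (V @ js'))"
          using G_pos[of "V @ js'" 1] V(1) js' by auto
        ultimately show ?thesis by (rule nf_trans)
      next
        case m1: False
        have o1: "Omega_pow (- int m) = replicate m OmI" using False by (simp add: Omega_pow_def)
        have o2: "Omega_pow (- int (m - 2)) = replicate (m - 2) OmI"
          by (cases "m - 2 = 0") (simp_all add: Omega_pow_def)
        have op: "Omega_pow (- int m) = Omega_pow (- int (m - 2)) @ [OmI, OmI]"
          unfolding o1 o2 using rep2[of m OmI] False m1 by simp
        have "R (Omega_pow (- int (m - 2)) @ [OmI, OmI, E j] @ map E js')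
                (Omega_pow (- int (m - 2)) @ map E V @ map E js')"
          using vOm js' by (intro cong[OF V(2)]) auto
        then have r: "R (Omega_pow (- int m) @ map E js) (Omega_pow (- int (m - 2)) @ map E (V @ js'))"
          unfolding op Cons by simp
        have "nf n \<beta> (Omega_pow (- int (m - 2)) @ map E (V @ js'))"
          using less.IH[of "m - 2" "V @ js'"] False V(1) js' by auto
        with r show ?thesis by (rule nf_trans)
      qed
    qed
  qed
qed

lemma G: "\<forall>j\<in>set js. j < n \<Longrightarrow> nf n \<beta> (Omega_pow k @ map E js)"
proof -
  assume js: "\<forall>j\<in>set js. j < n"
  show ?thesis
  proof (cases "k \<ge> 0")
    case True
    from G_pos[OF js, of "nat k"] show ?thesis using True by simp
  next
    case False
    from G_neg[OF js, of "nat (- k)"] show ?thesis using False by simp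
  qed
qed

lemma pow_Om: "R (Omega_pow k @ [Om]) (Omega_pow (k + 1))"
proof (cases "k \<ge> 0")
  case True
  then have "nat (k + 1) = Suc (nat k)" by simp
  then show ?thesis using True by (simp add: Omega_pow_def replicate_append_same req_refl)
next
  case False
  define m where "m = nat (- k - 1)"
  have nk: "nat (- k) = Suc m" using False unfolding m_def by simp
  have a: "Omega_pow k @ [Om] = replicate m OmI @ [OmI, Om] @ []"
    using False nk rep_snoc[of m OmI "[Om]"] by (simp add: Omega_pow_def)
  have b: "Omega_pow (k + 1) = replicate m OmI @ [] @ []"
    using False unfolding m_def Omega_pow_def by auto
  show ?thesis unfolding a b by (intro cong[OF R2]) auto
qed

lemma pow_OmI: "R (Omega_pow k @ [OmI]) (Omega_pow (k - 1))"
proof (cases "k \<le> 0")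
  case True
  then have "nat (- (k - 1)) = Suc (nat (- k))" by simp
  then show ?thesis using True by (simp add: Omega_pow_def replicate_append_same req_refl)
next
  case False
  define m where "m = nat (k - 1)"
  have nk: "nat k = Suc m" using False unfolding m_def by simp
  have a: "Omega_pow k @ [OmI] = replicate m Om @ [Om, OmI] @ []"
    using False nk rep_snoc[of m Om "[OmI]"] by (simp add: Omega_pow_def)
  have b: "Omega_pow (k - 1) = replicate m Om @ [] @ []"
    using False unfolding m_def Omega_pow_def by auto
  show ?thesis unfolding a b by (intro cong[OF R1]) auto
qed

lemma move_left: "\<forall>g\<in>set c. valid_gen n g \<Longrightarrow>
   \<exists>k js. (\<forall>j\<in>set js. j < n) \<and> R c (Omega_pow k @ map E js)"
proof (induction c rule: rev_induct)
  case Nil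
  show ?case by (intro exI[of _ 0] exI[of _ "[]"]) (simp add: Omega_pow_def req_refl)
next
  case (snoc g c)
  then obtain k js where kj: "\<forall>j\<in>set js. j < n" "R c (Omega_pow k @ map E js)" by auto
  have vg: "valid_gen n g" using snoc.prems by simp
  have c1: "R ([] @ c @ [g]) ([] @ (Omega_pow k @ map E js) @ [g])"
    using vg by (intro cong[OF kj(2)]) auto
  show ?case
  proof (cases g)
    case Om
    let ?js = "map (\<lambda>j. (j + 1) mod n) js"
    have "R ([] @ c @ [g]) ([] @ (Omega_pow k @ map E js) @ [g])" by (rule c1)
    also have "R \<dots> (Omega_pow k @ (map E js @ [Om]) @ [])" using Om by (simp add: req_refl)
    also have "R \<dots> (Omega_pow k @ (Om # map E ?js) @ [])"
      using vOm kj(1) by (intro cong[OF shift_up]) auto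
    also have "R \<dots> ([] @ (Omega_pow k @ [Om]) @ map E ?js)" by (simp add: req_refl)
    also have "R \<dots> ([] @ Omega_pow (k + 1) @ map E ?js)"
      using n2 by (intro cong[OF pow_Om]) auto
    finally show ?thesis using n2 by (intro exI[of _ "k + 1"] exI[of _ ?js]) auto
  next
    case OmI
    let ?js = "map (\<lambda>j. (j + n - 1) mod n) js"
    have "R ([] @ c @ [g]) ([] @ (Omega_pow k @ map E js) @ [g])" by (rule c1)
    also have "R \<dots> (Omega_pow k @ (map E js @ [OmI]) @ [])" using OmI by (simp add: req_refl)
    also have "R \<dots> (Omega_pow k @ (OmI # map E ?js) @ [])"
      using vOm kj(1) by (intro cong[OF shift_down]) auto
    also have "R \<dots> ([] @ (Omega_pow k @ [OmI]) @ map E ?js)" by (simp add: req_refl)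
    also have "R \<dots> ([] @ Omega_pow (k - 1) @ map E ?js)"
      using n2 by (intro cong[OF pow_OmI]) auto
    finally show ?thesis using n2 by (intro exI[of _ "k - 1"] exI[of _ ?js]) auto
  next
    case (E j)
    then have "j < n" using vg by simp
    then show ?thesis using c1 kj(1) E by (intro exI[of _ k] exI[of _ "js @ [j]"]) auto
  qed
qed

lemma main_nf: "\<forall>g\<in>set c. valid_gen n g \<Longrightarrow> nf n \<beta> c"
proof -
  assume "\<forall>g\<in>set c. valid_gen n g"
  then obtain k js where kj: "\<forall>j\<in>set js. j < n" "R c (Omega_pow k @ map E js)"
    using move_left by blast
  show ?thesis by (rule nf_trans[OF kj(2) G[OF kj(1)]])
qed

end

theorem proposition2p1:
  fixes n :: nat and q :: complex and c :: "gen list"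
  assumes "n > 2" and "q \<noteq> 0" and "\<forall>g\<in>set c. valid_gen n g"
  shows "(\<exists>k::int. aTL_eq n (- q - inverse q) (wd c) (wd (Omega_pow k)))
       \<or> (\<exists>w. (\<forall>g\<in>set w. \<exists>j<n. g = E j) \<and> aTL_eq n (- q - inverse q) (wd c) (wd w))
       \<or> (\<exists>w. (\<forall>g\<in>set w. \<exists>j<n. g = E j) \<and> aTL_eq n (- q - inverse q) (wd c) (wd (Om # w)))"
  using main_nf[OF assms(1) assms(3), of "- q - inverse q"] unfolding nf_def req_def .

end
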